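(* Fix $\mathcal I_{1:V}=(\mathscr C_t,x_t)_{t=1}^V$, $K\ge0$, an integer $r\ge1$, and $\lambda>0$, and let $\mathcal G=L_K(\mathcal I_{1:V})$. Then the relaxation $$\mathbf{Rel}(\mathcal G\mid y_{1:t})=\mathbb E_{\boldsymbol\epsilon_{t+1:V}}\sup_{\mathbf U\in\mathcal{L}\mathrm{as}(r,L_{x_{1:V}})}\Big\{2\sum_{j=t+1}^V\sum_{k=1}^\kappa\boldsymbol\epsilon_{j,k}\|\mathbf U_{\{j\},k}\|^2+\sum_{s=1}^t\|\mathbf U_{\{s\},y_s}\|^2-\lambda\sum_{c\in\cup_{t}\mathscr C_t}\sum_{\alpha\in[\kappa]^{S_c}}R_c(\alpha)\|\mathbf U_{S_c,\alpha}\|^2\Big\}-t+\lambda K$$ is admissible for prediction with respect to $\mathcal G$, where $\boldsymbol\epsilon_{j}\in\{-1,1\}^\kappa$ are vectors of independent Rademacher variables. Moreover, the randomized strategy which at round $t$ draws $\boldsymbol\epsilon_{t+1:V}$ and predicts $\widehat y_t\sim\widehat q_t(\boldsymbol\epsilon_{t+1:V})$, where $$\widehat q_t(\boldsymbol\epsilon_{t+1:V})=\operatorname*{argmin}_{q\in\Delta([\kappa])}\sup_{y_t\in[\kappa]}\Big\{\sup_{\mathbf U\in\mathcal{L}\mathrm{as}(r,L_{x_{1:V}})}\Big\{2\sum_{j=t+1}^V\sum_{k=1}^\kappa\boldsymbol\epsilon_{j,k}\|\mathbf U_{\{j\},k}\|^2+\sum_{s=1}^t\|\mathbf U_{\{s\},y_s}\|^2-\lambda\sum_{c\in\cup_t\mathscr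 C_t}\sum_{\alpha\in[\kappa]^{S_c}}R_c(\alpha)\|\mathbf U_{S_c,\alpha}\|^2\Big\}-q[y_t]\Big\},$$ satisfies, for every $t\in[V]$ and $y_{1:t-1}$, $\max_{y_t\in[\kappa]}\{\mathbb E[\mathbf 1\{\widehat y_t\ne y_t\}]+\mathbf{Rel}(\mathcal G\mid y_{1:t})\}\le\mathbf{Rel}(\mathcal G\mid y_{1:t-1})$, the expectation being over $\boldsymbol\epsilon_{t+1:V}$ and $\widehat y_t$.
   Context: Notation: $[n]=\{1,\dots,n\}$, $a_{1:t}=(a_1,\dots,a_t)$, $\Delta(A)$ the set of distributions on $A$, $q[y]$ the probability of $y$ under $q$. Setting: $V\ge1$, $\kappa\ge2$, a set $\mathcal X$, a class $L$ of functions $\mathcal X\to[\kappa]$. A constraint $c$ is a pair $(S_c,R_c)$, $S_c\subseteq[V]$, $R_c:[\kappa]^{S_c}\to\mathbb R_{\ge0}$; for $g\in[\kappa]^V$, $c(g)=R_c(g|_{S_c})$. $\mathcal I_t=(\mathscr C_t,x_t)$ with $x_t\in\mathcal X$ and $\mathscr C_t$ a finite set of constraints. $L_K(\mathcal I_{1:V})=\{f\in L:\sum_{c\in\cup_t\mathscr C_t}c((f(x_1),\dots,f(x_V)))\le K\}$. Loss $\ell(\widehat y,y)=\mathbf 1\{\widehat y\ne y\}$. Standing assumption: $L_{x_{1:V}}:=\{M\in\{0,1\}^{V\times\kappa}:\exists f\in L,\ M_{t,i}=\mathbf 1\{f(x_t)=i\}\}$ equals $\{0,1\}^{V\times\kappa}\cap\{M: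 M^\top B^j\le c_j,\ j\in[d]\}$ for some $B^j\in\mathbb R^{V\times\kappa}$, $c_j\in\mathbb R$. $\mathcal{L}\mathrm{as}(r,L_{x_{1:V}})$ is the set of families of vectors $\mathbf U_{S,\alpha}$ ($S\subseteq[V]$, $|S|\le r$, $\alpha\in[\kappa]^S$, including $\mathbf U_{\emptyset,\emptyset}$) satisfying: $\langle\mathbf U_{S_1,\alpha_1},\mathbf U_{S_2,\alpha_2}\rangle=0$ whenever $\alpha_1,\alpha_2$ disagree on $S_1\cap S_2$; $\langle\mathbf U_{S_1,\alpha_1},\mathbf U_{S_2,\alpha_2}\rangle=\langle\mathbf U_{S_3,\alpha_3},\mathbf U_{S_4,\alpha_4}\rangle$ whenever $S_1\cup S_2=S_3\cup S_4$ and $\alpha_1\circ\alpha_2=\alpha_3\circ\alpha_4$ (combined assignments); $\sum_{k}\|\mathbf U_{\{i\},k}\|^2=1$ for all $i$, $\|\mathbf U_{\emptyset,\emptyset}\|^2=1$; all inner products are $\ge0$; and for all $S,\alpha,j$: $\sum_{v\in[V],\beta\in[\kappa]}\|\mathbf U_{S\cup\{v\},\alpha\circ\beta}\|^2B^j_{(v,\beta)}\le c_j\|\mathbf U_{S,\alpha}\|^2$. Admissibility: for fixed $x_{1:V}$ and class $\mathcal G$, functions $\mathbf{Rel}(\mathcal G\mid y_{1:t})$, $t=0,\dots,V$, are admissible if (i) $\mathbf{Rel}(\mathcal G\mid y_{1:V})\ge-\inf_{f\in\mathcal G}\sum_t\ell(f(x_t),y_t)$ for all $y_{1:V}$, and (ii)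 $\inf_{q\in\Delta([\kappa])}\sup_{y_t}\{\mathbb E_{\widehat y\sim q}\ell(\widehat y,y_t)+\mathbf{Rel}(\mathcal G\mid y_{1:t})\}\le\mathbf{Rel}(\mathcal G\mid y_{1:t-1})$ for all $t$ and $y_{1:t-1}$. *)

theory Defs
  imports "HOL-Analysis.Analysis"
begin

definition loss :: "nat \<Rightarrow> nat \<Rightarrow> real" where
  "loss a b = (if a \<noteq> b then 1 else 0)"

text \<open>Assignments \<alpha> in [\<kappa>]^S, represented extensionally (undefined outside S).\<close>
definition asg :: "nat set \<Rightarrow> nat \<Rightarrow> (nat \<Rightarrow> nat) set" where
  "asg S \<kappa> = PiE S (\<lambda>_. {1..\<kappa>})"

definition sg :: "nat \<Rightarrow> nat \<Rightarrow> nat \<Rightarrow> nat" where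
  "sg j k = (\<lambda>v. if v = j then k else undefined)"

definition consistent :: "nat set \<Rightarrow> (nat \<Rightarrow> nat) \<Rightarrow> nat set \<Rightarrow> (nat \<Rightarrow> nat) \<Rightarrow> bool" where
  "consistent S1 a1 S2 a2 \<longleftrightarrow> (\<forall>v\<in>S1 \<inter> S2. a1 v = a2 v)"

definition comb :: "nat set \<Rightarrow> (nat \<Rightarrow> nat) \<Rightarrow> nat set \<Rightarrow> (nat \<Rightarrow> nat) \<Rightarrow> nat \<Rightarrow> nat" where
  "comb S1 a1 S2 a2 = (\<lambda>v. if v \<in> S1 then a1 v else if v \<in> S2 then a2 v else undefined)"

definition idx :: "nat \<Rightarrow> nat \<Rightarrow> nat \<Rightarrow> (nat set \<times> (nat \<Rightarrow> nat)) set" where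
  "idx V \<kappa> r = {(S, \<alpha>). S \<subseteq> {1..V} \<and> card S \<le> r \<and> \<alpha> \<in> asg S \<kappa>}"

text \<open>The level-r Lasserre set Las(r, L_{x_{1:V}}) w.r.t. the polytope description
  (B^j, c_j), j \<in> [d]; B j v \<beta> stands for B^j_{(v,\<beta>)}.\<close>
definition lasserre ::
  "nat \<Rightarrow> nat \<Rightarrow> nat \<Rightarrow> nat \<Rightarrow> (nat \<Rightarrow> nat \<Rightarrow> nat \<Rightarrow> real) \<Rightarrow> (nat \<Rightarrow> real)
     \<Rightarrow> (nat set \<Rightarrow> (nat \<Rightarrow> nat) \<Rightarrow> 'v::real_inner) set" where
  "lasserre V \<kappa> r d B c = {U.
     (\<forall>(S1, a1)\<in>idx V \<kappa> r. \<forall>(S2, a2)\<in>idx V \<kappa> r.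
        \<not> consistent S1 a1 S2 a2 \<longrightarrow> inner (U S1 a1) (U S2 a2) = 0) \<and>
     (\<forall>(S1, a1)\<in>idx V \<kappa> r. \<forall>(S2, a2)\<in>idx V \<kappa> r. \<forall>(S3, a3)\<in>idx V \<kappa> r. \<forall>(S4, a4)\<in>idx V \<kappa> r.
        consistent S1 a1 S2 a2 \<and> consistent S3 a3 S4 a4 \<and> S1 \<union> S2 = S3 \<union> S4 \<and>
        comb S1 a1 S2 a2 = comb S3 a3 S4 a4 \<longrightarrow>
        inner (U S1 a1) (U S2 a2) = inner (U S3 a3) (U S4 a4)) \<and>
     (\<forall>i\<in>{1..V}. (\<Sum>k\<in>{1..\<kappa>}. (norm (U {i} (sg i k)))\<^sup>2) = 1) \<and>
     (norm (U {} (\<lambda>_. undefined)))\<^sup>2 = 1 \<and>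
     (\<forall>(S1, a1)\<in>idx V \<kappa> r. \<forall>(S2, a2)\<in>idx V \<kappa> r. 0 \<le> inner (U S1 a1) (U S2 a2)) \<and>
     (\<forall>(S, \<alpha>)\<in>idx V \<kappa> r. card S < r \<longrightarrow> (\<forall>j\<in>{1..d}.
        (\<Sum>v\<in>{1..V}. \<Sum>\<beta>\<in>{1..\<kappa>}.
           (if v \<in> S \<and> \<alpha> v \<noteq> \<beta> then 0
            else (norm (U (S \<union> {v}) (comb S \<alpha> {v} (sg v \<beta>))))\<^sup>2) * B j v \<beta>)
        \<le> c j * (norm (U S \<alpha>))\<^sup>2))}"

definition signs :: "nat \<Rightarrow> nat \<Rightarrow> nat \<Rightarrow> (nat \<Rightarrow> nat \<Rightarrow> real) set" where
  "signs V \<kappa> t = PiE {t+1..V} (\<lambda>_. PiE {1..\<kappa>} (\<lambda>_. {-1, 1}))"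

text \<open>Constraint set: pairs (S_c, R_c); the union of all C_t.\<close>
type_synonym constr = "nat set \<times> ((nat \<Rightarrow> nat) \<Rightarrow> real)"

definition allC :: "nat \<Rightarrow> (nat \<Rightarrow> constr set) \<Rightarrow> constr set" where
  "allC V Cs = (\<Union>t\<in>{1..V}. Cs t)"

definition obj :: "nat \<Rightarrow> nat \<Rightarrow> constr set \<Rightarrow> real \<Rightarrow> nat \<Rightarrow> (nat \<Rightarrow> nat)
     \<Rightarrow> (nat \<Rightarrow> nat \<Rightarrow> real) \<Rightarrow> (nat set \<Rightarrow> (nat \<Rightarrow> nat) \<Rightarrow> 'v::real_inner) \<Rightarrow> real" where
  "obj V \<kappa> C lam t y \<epsilon> U =
     2 * (\<Sum>j\<in>{t+1..V}. \<Sum>k\<in>{1..\<kappa>}. \<epsilon> j k * (norm (U {j} (sg j k)))\<^sup>2)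
     + (\<Sum>s\<in>{1..t}. (norm (U {s} (sg s (y s))))\<^sup>2)
     - lam * (\<Sum>cc\<in>C. \<Sum>\<alpha>\<in>asg (fst cc) \<kappa>. snd cc \<alpha> * (norm (U (fst cc) \<alpha>))\<^sup>2)"

text \<open>The relaxation Rel(G | y_{1:t}); the expectation over independent Rademacher
  signs is the uniform average over all sign patterns.\<close>
definition Rel :: "(nat set \<Rightarrow> (nat \<Rightarrow> nat) \<Rightarrow> 'v::real_inner) set \<Rightarrow> nat \<Rightarrow> nat \<Rightarrow> constr set
     \<Rightarrow> real \<Rightarrow> real \<Rightarrow> nat \<Rightarrow> (nat \<Rightarrow> nat) \<Rightarrow> real" where
  "Rel Las V \<kappa> C lam K t y =
     (\<Sum>\<epsilon>\<in>signs V \<kappa> t. (SUP U\<in>Las. obj V \<kappa> C lam t y \<epsilon> U)) / real (card (signs V \<kappa> t))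
     - real t + lam * K"

definition LK :: "('x \<Rightarrow> nat) set \<Rightarrow> (nat \<Rightarrow> 'x) \<Rightarrow> constr set \<Rightarrow> real \<Rightarrow> ('x \<Rightarrow> nat) set" where
  "LK L x C K = {f\<in>L. (\<Sum>cc\<in>C. snd cc (restrict (\<lambda>t. f (x t)) (fst cc))) \<le> K}"

definition distr_on :: "nat \<Rightarrow> (nat \<Rightarrow> real) set" where
  "distr_on \<kappa> = {q. (\<forall>i\<in>{1..\<kappa>}. 0 \<le> q i) \<and> (\<Sum>i\<in>{1..\<kappa>}. q i) = 1}"

text \<open>Admissibility of relaxation Rel (Rel t y depends on y_{1..t}).
  Condition (i): Rel(y_{1:V}) \<ge> -inf_f loss = sup_f (-loss), written pointwise.\<close>
definition admissible :: "nat \<Rightarrow> nat \<Rightarrow> ('x \<Rightarrow> nat) set \<Rightarrow> (nat \<Rightarrow> 'x)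
     \<Rightarrow> (nat \<Rightarrow> (nat \<Rightarrow> nat) \<Rightarrow> real) \<Rightarrow> bool" where
  "admissible V \<kappa> G x R \<longleftrightarrow>
     (\<forall>y. (\<forall>s\<in>{1..V}. y s \<in> {1..\<kappa>}) \<longrightarrow>
        (\<forall>f\<in>G. - (\<Sum>t\<in>{1..V}. loss (f (x t)) (y t)) \<le> R V y)) \<and>
     (\<forall>t\<in>{1..V}. \<forall>y. (\<forall>s\<in>{1..<t}. y s \<in> {1..\<kappa>}) \<longrightarrow>
        (INF q\<in>distr_on \<kappa>. Max ((\<lambda>yt. (\<Sum>i\<in>{1..\<kappa>}. q i * loss i yt) + R t (y(t := yt))) ` {1..\<kappa>}))
          \<le> R (t - 1) y)"

end

theory Submission
  imports Defs
begin

definition Sp :: "'u set \<Rightarrow> ('u \<Rightarrow> real) \<Rightarrow> ('u \<Rightarrow> real) \<Rightarrow> real" where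
  "Sp X A h = (SUP u\<in>X. A u + h u)"

lemma Sp_cong: "(\<And>u. u \<in> X \<Longrightarrow> h u = h' u) \<Longrightarrow> Sp X A h = Sp X A h'"
  unfolding Sp_def by (rule SUP_cong) auto

lemma Sp_upper:
  assumes "u \<in> X" "\<And>u. u \<in> X \<Longrightarrow> A u \<le> M" "\<And>u. u \<in> X \<Longrightarrow> h u \<le> H"
  shows "A u + h u \<le> Sp X A h"
  unfolding Sp_def
proof (rule cSUP_upper[OF assms(1)])
  show "bdd_above ((\<lambda>u. A u + h u) ` X)"
    by (rule bdd_aboveI2[where M="M+H"]) (use assms in force)
qed

lemma Sp_half:
  assumes X: "X \<noteq> {}" and Ab: "\<And>u. u \<in> X \<Longrightarrow> A u \<le> M"
    and b1: "\<And>u. u \<in> X \<Longrightarrow> h1 u \<le> H" and b2: "\<And>u. u \<in> X \<Longrightarrow> h2 u \<le> H"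
    and le: "\<And>u. u \<in> X \<Longrightarrow> h u \<le> (h1 u + h2 u) / 2"
  shows "Sp X A h \<le> (Sp X A h1 + Sp X A h2) / 2"
proof -
  have "Sp X A h = (SUP u\<in>X. A u + h u)" by (simp add: Sp_def)
  also have "\<dots> \<le> (Sp X A h1 + Sp X A h2) / 2"
  proof (rule cSUP_least[OF X])
    fix u assume u: "u \<in> X"
    have "A u + h1 u \<le> Sp X A h1" by (rule Sp_upper[OF u Ab b1])
    moreover have "A u + h2 u \<le> Sp X A h2" by (rule Sp_upper[OF u Ab b2])
    ultimately show "A u + h u \<le> (Sp X A h1 + Sp X A h2) / 2" using le[OF u] by (simp add: field_simps)
  qed
  finally show ?thesis .
qed

lemma Sp_pair:
  assumes X: "X \<noteq> {}" and Ab: "\<And>u. u \<in> X \<Longrightarrow> A u \<le> M"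
    and wb: "\<And>u. u \<in> X \<Longrightarrow> \<bar>w u\<bar> \<le> H"
  shows "2 * Sp X A (\<lambda>u. 0) \<le> Sp X A (\<lambda>u. 2 * w u) + Sp X A (\<lambda>u. - (2 * w u))"
    and "2 * Sp X A w + 2 * Sp X A (\<lambda>u. - w u) \<le>
         Sp X A (\<lambda>u. 2 * w u) + Sp X A (\<lambda>u. - (2 * w u)) + 2 * Sp X A (\<lambda>u. 0)"
proof -
  have H0: "0 \<le> H" using wb X by force
  have b2: "\<And>u. u \<in> X \<Longrightarrow> 2 * w u \<le> 2 * H" "\<And>u. u \<in> X \<Longrightarrow> - (2 * w u) \<le> 2 * H"
    "\<And>u. u \<in> X \<Longrightarrow> (0::real) \<le> 2 * H"
    using wb H0 by (force simp: abs_le_iff)+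
  show "2 * Sp X A (\<lambda>u. 0) \<le> Sp X A (\<lambda>u. 2 * w u) + Sp X A (\<lambda>u. - (2 * w u))"
    using Sp_half[of X A M "\<lambda>u. 2 * w u" "2*H" "\<lambda>u. - (2 * w u)" "\<lambda>u. 0", OF X Ab b2(1) b2(2)] by (simp add: field_simps)
  have "Sp X A w \<le> (Sp X A (\<lambda>u. 2 * w u) + Sp X A (\<lambda>u. 0)) / 2"
    using Sp_half[of X A M "\<lambda>u. 2 * w u" "2*H" "\<lambda>u. 0" w, OF X Ab b2(1) b2(3)] by (simp add: field_simps)
  moreover have "Sp X A (\<lambda>u. - w u) \<le> (Sp X A (\<lambda>u. - (2 * w u)) + Sp X A (\<lambda>u. 0)) / 2"
    using Sp_half[of X A M "\<lambda>u. - (2 * w u)" "2*H" "\<lambda>u. 0" "\<lambda>u. - w u", OF X Ab b2(2) b2(3)] by (simp add: field_simps)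
  ultimately show "2 * Sp X A w + 2 * Sp X A (\<lambda>u. - w u) \<le>
         Sp X A (\<lambda>u. 2 * w u) + Sp X A (\<lambda>u. - (2 * w u)) + 2 * Sp X A (\<lambda>u. 0)" by (simp add: field_simps)
qed

lemma sum_invol:
  assumes "\<And>x. x \<in> S \<Longrightarrow> f x \<in> S" "\<And>x. x \<in> S \<Longrightarrow> f (f x) = x"
  shows "(\<Sum>x\<in>S. g (f x)) = (\<Sum>x\<in>S. g x)"
  by (rule sum.reindex_bij_witness[of S f f]) (auto simp: assms)


context
  fixes X :: "'u set" and A :: "'u \<Rightarrow> real" and a :: "'u \<Rightarrow> nat \<Rightarrow> real" and \<kappa> :: nat and M :: real
  assumes Xne: "X \<noteq> {}" and Ab: "\<And>u. u \<in> X \<Longrightarrow> A u \<le> M"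
    and an: "\<And>u k. u \<in> X \<Longrightarrow> k \<in> {1..\<kappa>} \<Longrightarrow> 0 \<le> a u k"
    and as: "\<And>u. u \<in> X \<Longrightarrow> (\<Sum>k\<in>{1..\<kappa>}. a u k) = 1"
begin

lemma a_le1: "u \<in> X \<Longrightarrow> k \<in> {1..\<kappa>} \<Longrightarrow> a u k \<le> 1"
  using member_le_sum[of k "{1..\<kappa>}" "a u"] an as by auto

lemma sig_abs:
  assumes "\<sigma> \<in> PiE {1..\<kappa>} (\<lambda>_. {-1, 1::real})" "u \<in> X"
  shows "\<bar>\<Sum>k\<in>{1..\<kappa>}. \<sigma> k * a u k\<bar> \<le> 1"
proof -
  have "\<bar>\<Sum>k\<in>{1..\<kappa>}. \<sigma> k * a u k\<bar> \<le> (\<Sum>k\<in>{1..\<kappa>}. \<bar>\<sigma> k * a u k\<bar>)" by (rule sum_abs)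
  also have "\<dots> = (\<Sum>k\<in>{1..\<kappa>}. a u k)"
  proof (rule sum.cong)
    fix k assume k: "k \<in> {1..\<kappa>}"
    have "\<sigma> k \<in> {-1, 1}" using assms(1) k by (auto simp: PiE_iff)
    then show "\<bar>\<sigma> k * a u k\<bar> = a u k" using an[OF assms(2) k] by (auto simp: abs_mult)
  qed simp
  finally show ?thesis using as[OF assms(2)] by simp
qed

lemma fin_Sg: "finite (PiE {1..\<kappa>} (\<lambda>_. {-1, 1::real}))"
  by (rule finite_PiE) auto

lemma card_Sg: "card (PiE {1..\<kappa>} (\<lambda>_. {-1, 1::real})) = 2 ^ \<kappa>"
  by (simp add: card_PiE numeral_2_eq_2)

abbreviation F where "F \<sigma> \<equiv> Sp X A (\<lambda>u. 2 * (\<Sum>k\<in>{1..\<kappa>}. \<sigma> k * a u k))"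

lemma F_bd: "\<sigma> \<in> PiE {1..\<kappa>} (\<lambda>_. {-1, 1::real}) \<Longrightarrow> u \<in> X \<Longrightarrow> 2 * (\<Sum>k\<in>{1..\<kappa>}. \<sigma> k * a u k) \<le> 2"
  using sig_abs[of \<sigma> u] by (simp add: abs_le_iff)

lemma Sp0_le:
  "Sp X A (\<lambda>u. 0) \<le> (\<Sum>\<sigma>\<in>PiE {1..\<kappa>} (\<lambda>_. {-1, 1::real}). F \<sigma>) / card (PiE {1..\<kappa>} (\<lambda>_. {-1, 1::real}))"
proof -
  define S where "S = PiE {1..\<kappa>} (\<lambda>_. {-1, 1::real})"
  define \<nu> where "\<nu> \<sigma> = (\<lambda>j. if j \<in> {1..\<kappa>} then - \<sigma> j else \<sigma> j)" for \<sigma> :: "nat \<Rightarrow> real"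
  have \<nu>S: "\<nu> \<sigma> \<in> S" if "\<sigma> \<in> S" for \<sigma> using that by (auto simp: S_def \<nu>_def PiE_iff extensional_def)
  have \<nu>\<nu>: "\<nu> (\<nu> \<sigma>) = \<sigma>" for \<sigma> by (auto simp: \<nu>_def)
  have st: "Sp X A (\<lambda>u. 0) \<le> (F \<sigma> + F (\<nu> \<sigma>)) / 2" if "\<sigma> \<in> S" for \<sigma>
  proof (rule Sp_half[OF Xne Ab])
    fix u assume u: "u \<in> X"
    show "2 * (\<Sum>k\<in>{1..\<kappa>}. \<sigma> k * a u k) \<le> 2" using F_bd that u S_def by simp
    show "2 * (\<Sum>k\<in>{1..\<kappa>}. \<nu> \<sigma> k * a u k) \<le> 2" using F_bd \<nu>S[OF that] u S_def by simp
    have "(\<Sum>k\<in>{1..\<kappa>}. \<nu> \<sigma> k * a u k) = (\<Sum>k\<in>{1..\<kappa>}. - (\<sigma> k * a u k))"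
      by (rule sum.cong) (auto simp: \<nu>_def)
    then show "0 \<le> (2 * (\<Sum>k\<in>{1..\<kappa>}. \<sigma> k * a u k) + 2 * (\<Sum>k\<in>{1..\<kappa>}. \<nu> \<sigma> k * a u k)) / 2"
      by (simp add: sum_negf)
  qed
  have fin: "finite S" using fin_Sg S_def by simp
  have cpos: "card S > 0" using card_Sg S_def by simp
  have "real (card S) * Sp X A (\<lambda>u. 0) = (\<Sum>\<sigma>\<in>S. Sp X A (\<lambda>u. 0))" by simp
  also have "\<dots> \<le> (\<Sum>\<sigma>\<in>S. (F \<sigma> + F (\<nu> \<sigma>)) / 2)" by (rule sum_mono) (rule st)
  also have "\<dots> = ((\<Sum>\<sigma>\<in>S. F \<sigma>) + (\<Sum>\<sigma>\<in>S. F (\<nu> \<sigma>))) / 2"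
    by (simp add: sum.distrib sum_divide_distrib[symmetric])
  also have "(\<Sum>\<sigma>\<in>S. F (\<nu> \<sigma>)) = (\<Sum>\<sigma>\<in>S. F \<sigma>)"
    by (rule sum_invol[where f=\<nu>]) (auto simp: \<nu>S \<nu>\<nu>)
  finally have "real (card S) * Sp X A (\<lambda>u. 0) \<le> (\<Sum>\<sigma>\<in>S. F \<sigma>)" by simp
  then show ?thesis using cpos unfolding S_def[symmetric] by (simp add: field_simps)
qed


lemma pair_neq:
  assumes y: "y \<in> {1..\<kappa>}" and k: "k \<in> {1..\<kappa>}" and yk: "y \<noteq> k"
  shows "Sp X A (\<lambda>u. a u y - a u k) + Sp X A (\<lambda>u. a u k - a u y)
     \<le> 2 * ((\<Sum>\<sigma>\<in>PiE {1..\<kappa>} (\<lambda>_. {-1, 1::real}). F \<sigma>) / card (PiE {1..\<kappa>} (\<lambda>_. {-1, 1::real})))"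
proof -
  define S where "S = PiE {1..\<kappa>} (\<lambda>_. {-1, 1::real})"
  define W where "W p q = Sp X A (\<lambda>u. 2 * p * a u y + 2 * q * a u k)" for p q :: real
  define F0 where "F0 \<sigma> = W (\<sigma> y) (\<sigma> k)" for \<sigma> :: "nat \<Rightarrow> real"
  define \<iota> where "\<iota> \<sigma> = (\<lambda>j. if j \<in> {1..\<kappa>} - {y, k} then - \<sigma> j else \<sigma> j)" for \<sigma> :: "nat \<Rightarrow> real"
  define G1 where "G1 = Sp X A (\<lambda>u. a u y - a u k)"
  define G2 where "G2 = Sp X A (\<lambda>u. a u k - a u y)"
  have fin: "finite S" using fin_Sg S_def by simp
  have cpos: "card S > 0" using card_Sg S_def by simp
  have \<iota>S: "\<iota> \<sigma> \<in> S" if "\<sigma> \<in> S" for \<sigma> using that by (auto simp: S_def \<iota>_def PiE_iff extensional_def)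
  have \<iota>\<iota>: "\<iota> (\<iota> \<sigma>) = \<sigma>" for \<sigma> by (auto simp: \<iota>_def)
  have st1: "F0 \<sigma> \<le> (F \<sigma> + F (\<iota> \<sigma>)) / 2" if "\<sigma> \<in> S" for \<sigma>
    unfolding F0_def W_def
  proof (rule Sp_half[OF Xne Ab])
    fix u assume u: "u \<in> X"
    show "2 * (\<Sum>k\<in>{1..\<kappa>}. \<sigma> k * a u k) \<le> 2" using F_bd that u S_def by simp
    show "2 * (\<Sum>k\<in>{1..\<kappa>}. \<iota> \<sigma> k * a u k) \<le> 2" using F_bd \<iota>S[OF that] u S_def by simp
    have e: "\<sigma> j * a u j + \<iota> \<sigma> j * a u j
       = (if j = y then 2 * \<sigma> y * a u y else 0) + (if j = k then 2 * \<sigma> k * a u k else 0)"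
      if "j \<in> {1..\<kappa>}" for j using that yk by (auto simp: \<iota>_def)
    have "(\<Sum>j\<in>{1..\<kappa>}. \<sigma> j * a u j) + (\<Sum>j\<in>{1..\<kappa>}. \<iota> \<sigma> j * a u j)
        = (\<Sum>j\<in>{1..\<kappa>}. \<sigma> j * a u j + \<iota> \<sigma> j * a u j)" by (simp add: sum.distrib)
    also have "\<dots> = (\<Sum>j\<in>{1..\<kappa>}. (if j = y then 2 * \<sigma> y * a u y else 0) + (if j = k then 2 * \<sigma> k * a u k else 0))"
      by (rule sum.cong) (auto simp: e)
    also have "\<dots> = 2 * \<sigma> y * a u y + 2 * \<sigma> k * a u k"
      using y k by (simp add: sum.distrib)
    finally show "2 * \<sigma> y * a u y + 2 * \<sigma> k * a u k
      \<le> (2 * (\<Sum>k\<in>{1..\<kappa>}. \<sigma> k * a u k) + 2 * (\<Sum>k\<in>{1..\<kappa>}. \<iota> \<sigma> k * a u k)) / 2"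
      by simp
  qed
  have sum1: "(\<Sum>\<sigma>\<in>S. F0 \<sigma>) \<le> (\<Sum>\<sigma>\<in>S. F \<sigma>)"
  proof -
    have "(\<Sum>\<sigma>\<in>S. F0 \<sigma>) \<le> (\<Sum>\<sigma>\<in>S. (F \<sigma> + F (\<iota> \<sigma>)) / 2)" by (rule sum_mono) (rule st1)
    also have "\<dots> = ((\<Sum>\<sigma>\<in>S. F \<sigma>) + (\<Sum>\<sigma>\<in>S. F (\<iota> \<sigma>))) / 2"
      by (simp add: sum.distrib sum_divide_distrib[symmetric])
    also have "(\<Sum>\<sigma>\<in>S. F (\<iota> \<sigma>)) = (\<Sum>\<sigma>\<in>S. F \<sigma>)"
      by (rule sum_invol[where f=\<iota>]) (auto simp: \<iota>S \<iota>\<iota>)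
    finally show ?thesis by simp
  qed
  have a01: "0 \<le> a u j" "a u j \<le> 1" if "u \<in> X" "j \<in> {1..\<kappa>}" for u j
    using an a_le1 that by auto
  define w1 where "w1 u = a u y + a u k" for u
  define w2 where "w2 u = a u y - a u k" for u
  have w1b: "\<bar>w1 u\<bar> \<le> 2" if "u \<in> X" for u using a01[OF that y] a01[OF that k] by (simp add: w1_def)
  have w2b: "\<bar>w2 u\<bar> \<le> 2" if "u \<in> X" for u using a01[OF that y] a01[OF that k] by (simp add: w2_def)
  note p1 = Sp_pair(1)[of X A M w1 2, OF Xne Ab w1b]
  note p2 = Sp_pair(2)[of X A M w2 2, OF Xne Ab w2b]
  have W11: "W 1 1 = Sp X A (\<lambda>u. 2 * w1 u)" unfolding W_def w1_def by (rule Sp_cong) (simp add: algebra_simps)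
  have Wmm: "W (-1) (-1) = Sp X A (\<lambda>u. - (2 * w1 u))" unfolding W_def w1_def by (rule Sp_cong) (simp add: algebra_simps)
  have W1m: "W 1 (-1) = Sp X A (\<lambda>u. 2 * w2 u)" unfolding W_def w2_def by (rule Sp_cong) (simp add: algebra_simps)
  have Wm1: "W (-1) 1 = Sp X A (\<lambda>u. - (2 * w2 u))" unfolding W_def w2_def by (rule Sp_cong) (simp add: algebra_simps)
  have G1e: "G1 = Sp X A w2" unfolding G1_def w2_def by (rule Sp_cong) simp
  have G2e: "G2 = Sp X A (\<lambda>u. - w2 u)" unfolding G2_def w2_def by (rule Sp_cong) simp
  have base: "2 * G1 + 2 * G2 \<le> W 1 1 + W (-1) (-1) + W 1 (-1) + W (-1) 1"
    using p1 p2 W11 Wmm W1m Wm1 G1e G2e by linarith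
  define \<tau>1 where "\<tau>1 \<sigma> = \<sigma>(y := - \<sigma> y, k := - \<sigma> k)" for \<sigma> :: "nat \<Rightarrow> real"
  define \<tau>y where "\<tau>y \<sigma> = \<sigma>(y := - \<sigma> y)" for \<sigma> :: "nat \<Rightarrow> real"
  define \<tau>k where "\<tau>k \<sigma> = \<sigma>(k := - \<sigma> k)" for \<sigma> :: "nat \<Rightarrow> real"
  have quad: "2 * G1 + 2 * G2 \<le> F0 \<sigma> + F0 (\<tau>1 \<sigma>) + F0 (\<tau>y \<sigma>) + F0 (\<tau>k \<sigma>)" if "\<sigma> \<in> S" for \<sigma>
  proof -
    have "\<sigma> y \<in> {-1, 1}" "\<sigma> k \<in> {-1, 1}" using that y k by (auto simp: S_def PiE_iff)
    then show ?thesis using base yk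
      by (auto simp: F0_def \<tau>1_def \<tau>y_def \<tau>k_def)
  qed
  have S1: "\<tau>1 \<sigma> \<in> S" "\<tau>y \<sigma> \<in> S" "\<tau>k \<sigma> \<in> S" if "\<sigma> \<in> S" for \<sigma>
    using that y k by (auto simp: S_def PiE_iff extensional_def \<tau>1_def \<tau>y_def \<tau>k_def)
  have S2: "\<tau>1 (\<tau>1 \<sigma>) = \<sigma>" "\<tau>y (\<tau>y \<sigma>) = \<sigma>" "\<tau>k (\<tau>k \<sigma>) = \<sigma>" for \<sigma>
    using yk by (auto simp: \<tau>1_def \<tau>y_def \<tau>k_def)
  have "real (card S) * (2 * G1 + 2 * G2) = (\<Sum>\<sigma>\<in>S. 2 * G1 + 2 * G2)" by simp
  also have "\<dots> \<le> (\<Sum>\<sigma>\<in>S. F0 \<sigma> + F0 (\<tau>1 \<sigma>) + F0 (\<tau>y \<sigma>) + F0 (\<tau>k \<sigma>))"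
    by (rule sum_mono) (rule quad)
  also have "\<dots> = (\<Sum>\<sigma>\<in>S. F0 \<sigma>) + (\<Sum>\<sigma>\<in>S. F0 (\<tau>1 \<sigma>)) + (\<Sum>\<sigma>\<in>S. F0 (\<tau>y \<sigma>)) + (\<Sum>\<sigma>\<in>S. F0 (\<tau>k \<sigma>))"
    by (simp add: sum.distrib)
  also have "(\<Sum>\<sigma>\<in>S. F0 (\<tau>1 \<sigma>)) = (\<Sum>\<sigma>\<in>S. F0 \<sigma>)" by (rule sum_invol) (auto simp: S1 S2)
  also have "(\<Sum>\<sigma>\<in>S. F0 (\<tau>y \<sigma>)) = (\<Sum>\<sigma>\<in>S. F0 \<sigma>)" by (rule sum_invol) (auto simp: S1 S2)
  also have "(\<Sum>\<sigma>\<in>S. F0 (\<tau>k \<sigma>)) = (\<Sum>\<sigma>\<in>S. F0 \<sigma>)" by (rule sum_invol) (auto simp: S1 S2)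
  finally have "real (card S) * (2 * G1 + 2 * G2) \<le> 4 * (\<Sum>\<sigma>\<in>S. F \<sigma>)" using sum1 by linarith
  then show ?thesis using cpos unfolding S_def[symmetric] G1_def[symmetric] G2_def[symmetric]
    by (simp add: field_simps)
qed


lemma pair_all:
  assumes y: "y \<in> {1..\<kappa>}" and k: "k \<in> {1..\<kappa>}"
  shows "Sp X A (\<lambda>u. a u y - a u k) + Sp X A (\<lambda>u. a u k - a u y)
     \<le> 2 * ((\<Sum>\<sigma>\<in>PiE {1..\<kappa>} (\<lambda>_. {-1, 1::real}). F \<sigma>) / card (PiE {1..\<kappa>} (\<lambda>_. {-1, 1::real})))"
proof (cases "y = k")
  case True
  have "Sp X A (\<lambda>u. a u y - a u k) = Sp X A (\<lambda>u. 0)" by (rule Sp_cong) (simp add: True)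
  moreover have "Sp X A (\<lambda>u. a u k - a u y) = Sp X A (\<lambda>u. 0)" by (rule Sp_cong) (simp add: True)
  ultimately show ?thesis using Sp0_le by simp
next
  case False
  then show ?thesis using pair_neq y k by blast
qed

lemma core:
  assumes k1: "1 \<le> \<kappa>"
  shows "\<exists>q\<in>distr_on \<kappa>. \<forall>y\<in>{1..\<kappa>}. Sp X A (\<lambda>u. a u y) - q y
     \<le> (\<Sum>\<sigma>\<in>PiE {1..\<kappa>} (\<lambda>_. {-1, 1::real}). F \<sigma>) / card (PiE {1..\<kappa>} (\<lambda>_. {-1, 1::real}))"
proof -
  define R where "R = (\<Sum>\<sigma>\<in>PiE {1..\<kappa>} (\<lambda>_. {-1, 1::real}). F \<sigma>) / card (PiE {1..\<kappa>} (\<lambda>_. {-1, 1::real}))"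
  define \<Phi> where "\<Phi> y = Sp X A (\<lambda>u. a u y)" for y
  define G where "G y k = Sp X A (\<lambda>u. a u y - a u k)" for y k
  have pa: "G y k + G k y \<le> 2 * R" if "y \<in> {1..\<kappa>}" "k \<in> {1..\<kappa>}" for y k
    using pair_all[OF that] unfolding G_def R_def .
  define T where "T = {y \<in> {1..\<kappa>}. R < \<Phi> y}"
  have Tsub: "T \<subseteq> {1..\<kappa>}" and Tfin: "finite T" by (auto simp: T_def)
  have main: "(\<Sum>y\<in>T. \<Phi> y - R) \<le> 1"
  proof (cases "T = {}")
    case True then show ?thesis by simp
  next
    case False
    define m where "m = card T"
    have mpos: "0 < m" using False Tfin by (simp add: m_def card_gt_0_iff)
    have bnd: "\<Phi> y \<le> (1 + (\<Sum>k\<in>T. G y k)) / m" if yT: "y \<in> T" for y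
      unfolding \<Phi>_def Sp_def
    proof (rule cSUP_least[OF Xne])
      fix u assume u: "u \<in> X"
      have "A u + (a u y - a u k) \<le> G y k" if "k \<in> T" for k
        unfolding G_def
      proof (rule Sp_upper[OF u Ab])
        fix v assume v: "v \<in> X"
        have "y \<in> {1..\<kappa>}" "k \<in> {1..\<kappa>}" using yT that Tsub by auto
        then have "0 \<le> a v k" "a v y \<le> 1" using an[OF v] a_le1[OF v] by auto
        then show "a v y - a v k \<le> 1" by linarith
      qed
      then have "(\<Sum>k\<in>T. A u + (a u y - a u k)) \<le> (\<Sum>k\<in>T. G y k)" by (rule sum_mono)
      moreover have "(\<Sum>k\<in>T. A u + (a u y - a u k)) = m * (A u + a u y) - (\<Sum>k\<in>T. a u k)"
        by (simp add: sum_subtractf sum.distrib m_def algebra_simps)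
      moreover have "(\<Sum>k\<in>T. a u k) \<le> (\<Sum>k\<in>{1..\<kappa>}. a u k)"
        using Tsub an[OF u] by (intro sum_mono2) auto
      ultimately have "m * (A u + a u y) \<le> 1 + (\<Sum>k\<in>T. G y k)" using as[OF u] by linarith
      then show "A u + a u y \<le> (1 + (\<Sum>k\<in>T. G y k)) / m" using mpos by (simp add: field_simps)
    qed
    have "(\<Sum>y\<in>T. \<Phi> y) \<le> (\<Sum>y\<in>T. (1 + (\<Sum>k\<in>T. G y k)) / m)" by (rule sum_mono) (rule bnd)
    also have "\<dots> = (m + (\<Sum>y\<in>T. \<Sum>k\<in>T. G y k)) / m"
      by (simp add: sum_divide_distrib[symmetric] sum.distrib m_def)
    finally have s1: "(\<Sum>y\<in>T. \<Phi> y) \<le> (m + (\<Sum>y\<in>T. \<Sum>k\<in>T. G y k)) / m" .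
    have "2 * (\<Sum>y\<in>T. \<Sum>k\<in>T. G y k) = (\<Sum>y\<in>T. \<Sum>k\<in>T. G y k) + (\<Sum>y\<in>T. \<Sum>k\<in>T. G k y)"
      using sum.swap[of "\<lambda>y k. G k y" T T] by simp
    also have "\<dots> = (\<Sum>y\<in>T. \<Sum>k\<in>T. G y k + G k y)" by (simp add: sum.distrib)
    also have "\<dots> \<le> (\<Sum>y\<in>T. \<Sum>k\<in>T. 2 * R)"
    proof (intro sum_mono)
      fix y k assume "y \<in> T" "k \<in> T"
      then have "y \<in> {1..\<kappa>}" "k \<in> {1..\<kappa>}" using Tsub by auto
      then show "G y k + G k y \<le> 2 * R" by (rule pa)
    qed
    also have "\<dots> = 2 * (m * (m * R))" by (simp add: m_def)
    finally have "(\<Sum>y\<in>T. \<Sum>k\<in>T. G y k) \<le> m * (m * R)" by simp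
    with s1 have "(\<Sum>y\<in>T. \<Phi> y) \<le> (m + m * (m * R)) / m"
      using mpos by (smt (verit) divide_right_mono of_nat_0_le_iff)
    also have "\<dots> = 1 + m * R" using mpos by (simp add: field_simps)
    finally show ?thesis by (simp add: sum_subtractf m_def)
  qed
  define q where "q y = (if y \<in> T then \<Phi> y - R else 0) + (if y = 1 then 1 - (\<Sum>z\<in>T. \<Phi> z - R) else 0)" for y
  have qnn: "0 \<le> q y" for y using main by (auto simp: q_def T_def)
  have "(\<Sum>y\<in>{1..\<kappa>}. q y) = (\<Sum>y\<in>{1..\<kappa>}. if y \<in> T then \<Phi> y - R else 0) + (1 - (\<Sum>z\<in>T. \<Phi> z - R))"
    using k1 by (simp add: q_def sum.distrib)
  also have "(\<Sum>y\<in>{1..\<kappa>}. if y \<in> T then \<Phi> y - R else 0) = (\<Sum>y\<in>T. \<Phi> y - R)"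
  proof -
    have "(\<Sum>y\<in>{1..\<kappa>}. if y \<in> T then \<Phi> y - R else 0) = (\<Sum>y\<in>{1..\<kappa>} \<inter> T. \<Phi> y - R)"
      by (simp add: sum.inter_restrict)
    also have "{1..\<kappa>} \<inter> T = T" using Tsub by blast
    finally show ?thesis .
  qed
  finally have qs: "(\<Sum>y\<in>{1..\<kappa>}. q y) = 1" by simp
  have "q \<in> distr_on \<kappa>" using qnn qs by (simp add: distr_on_def)
  moreover have "\<Phi> y - q y \<le> R" if "y \<in> {1..\<kappa>}" for y
  proof (cases "y \<in> T")
    case True
    have "0 \<le> (if y = 1 then 1 - (\<Sum>z\<in>T. \<Phi> z - R) else 0)" using main by auto
    then show ?thesis using True by (simp add: q_def)
  next
    case False
    then show ?thesis using that qnn[of y] by (auto simp: T_def)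
  qed
  ultimately show ?thesis unfolding \<Phi>_def R_def by blast
qed

end

definition nn :: "(nat set \<Rightarrow> (nat \<Rightarrow> nat) \<Rightarrow> 'v::real_inner) \<Rightarrow> nat \<Rightarrow> nat \<Rightarrow> real" where
  "nn U j k = (norm (U {j} (sg j k)))\<^sup>2"

definition pen :: "nat \<Rightarrow> constr set \<Rightarrow> (nat set \<Rightarrow> (nat \<Rightarrow> nat) \<Rightarrow> 'v::real_inner) \<Rightarrow> real" where
  "pen \<kappa> C U = (\<Sum>cc\<in>C. \<Sum>\<alpha>\<in>asg (fst cc) \<kappa>. snd cc \<alpha> * (norm (U (fst cc) \<alpha>))\<^sup>2)"

definition AA :: "nat \<Rightarrow> nat \<Rightarrow> constr set \<Rightarrow> real \<Rightarrow> nat \<Rightarrow> (nat \<Rightarrow> nat) \<Rightarrow> (nat \<Rightarrow> nat \<Rightarrow> real)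
     \<Rightarrow> (nat set \<Rightarrow> (nat \<Rightarrow> nat) \<Rightarrow> 'v::real_inner) \<Rightarrow> real" where
  "AA V \<kappa> C lam t y \<epsilon> U = 2 * (\<Sum>j\<in>{t+1..V}. \<Sum>k\<in>{1..\<kappa>}. \<epsilon> j k * nn U j k)
     + (\<Sum>s\<in>{1..<t}. nn U s (y s)) - lam * pen \<kappa> C U"

lemma obj_t:
  assumes "1 \<le> t"
  shows "obj V \<kappa> C lam t (y(t := yt)) \<epsilon> U = AA V \<kappa> C lam t y \<epsilon> U + nn U t yt"
proof -
  have e: "{1..t} = insert t {1..<t}" using assms by auto
  have "(\<Sum>s\<in>{1..t}. (norm (U {s} (sg s ((y(t := yt)) s))))\<^sup>2)
      = nn U t yt + (\<Sum>s\<in>{1..<t}. nn U s (y s))"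
    unfolding e by (simp add: nn_def)
  then show ?thesis unfolding obj_def AA_def pen_def nn_def by simp
qed

lemma obj_tm1:
  assumes "1 \<le> t" "t \<le> V"
  shows "obj V \<kappa> C lam (t - 1) y (\<epsilon>(t := \<sigma>)) U
     = AA V \<kappa> C lam t y \<epsilon> U + 2 * (\<Sum>k\<in>{1..\<kappa>}. \<sigma> k * nn U t k)"
proof -
  have e1: "{t - 1 + 1..V} = insert t {t+1..V}" using assms by auto
  have e2: "{1..t-1} = {1..<t}" using assms by auto
  have "(\<Sum>j\<in>{t - 1 + 1..V}. \<Sum>k\<in>{1..\<kappa>}. (\<epsilon>(t := \<sigma>)) j k * (norm (U {j} (sg j k)))\<^sup>2)
     = (\<Sum>k\<in>{1..\<kappa>}. \<sigma> k * nn U t k) + (\<Sum>j\<in>{t+1..V}. \<Sum>k\<in>{1..\<kappa>}. \<epsilon> j k * nn U j k)"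
    unfolding e1 by (simp add: nn_def)
  then show ?thesis unfolding obj_def AA_def pen_def nn_def e2 by (simp add: algebra_simps)
qed

lemma las_sum:
  assumes "U \<in> lasserre V \<kappa> r d B c" "i \<in> {1..V}"
  shows "(\<Sum>k\<in>{1..\<kappa>}. nn U i k) = 1"
  using assms unfolding lasserre_def nn_def by auto

lemma las_le1:
  assumes "U \<in> lasserre V \<kappa> r d B c" "i \<in> {1..V}" "k \<in> {1..\<kappa>}"
  shows "nn U i k \<le> 1"
  using member_le_sum[of k "{1..\<kappa>}" "nn U i"] las_sum[OF assms(1,2)] assms(3)
  by (auto simp: nn_def)

lemma pen_nn:
  assumes "\<forall>cc\<in>C. \<forall>\<alpha>\<in>asg (fst cc) \<kappa>. 0 \<le> snd cc \<alpha>"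
  shows "0 \<le> pen \<kappa> C U"
  unfolding pen_def using assms by (intro sum_nonneg) auto

lemma AA_bd:
  assumes U: "U \<in> lasserre V \<kappa> r d B c" and eps: "\<epsilon> \<in> signs V \<kappa> t"
    and lam: "0 \<le> lam" and Cnn: "\<forall>cc\<in>C. \<forall>\<alpha>\<in>asg (fst cc) \<kappa>. 0 \<le> snd cc \<alpha>"
    and y: "\<forall>s\<in>{1..<t}. y s \<in> {1..\<kappa>}" and tV: "t \<le> V"
  shows "AA V \<kappa> C lam t y \<epsilon> U \<le> 2 * real (card {t+1..V}) + real (card {1..<t})"
proof -
  have "(\<Sum>k\<in>{1..\<kappa>}. \<epsilon> j k * nn U j k) \<le> 1" if j: "j \<in> {t+1..V}" for j
  proof -
    have "(\<Sum>k\<in>{1..\<kappa>}. \<epsilon> j k * nn U j k) \<le> (\<Sum>k\<in>{1..\<kappa>}. nn U j k)"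
    proof (rule sum_mono)
      fix k assume k: "k \<in> {1..\<kappa>}"
      have "\<epsilon> j k \<in> {-1, 1}" using eps j k by (auto simp: signs_def PiE_iff)
      moreover have "0 \<le> nn U j k" by (simp add: nn_def)
      ultimately show "\<epsilon> j k * nn U j k \<le> nn U j k" by auto
    qed
    also have "\<dots> = 1" using las_sum[OF U] j by auto
    finally show ?thesis .
  qed
  then have a: "(\<Sum>j\<in>{t+1..V}. \<Sum>k\<in>{1..\<kappa>}. \<epsilon> j k * nn U j k) \<le> real (card {t+1..V})"
    using sum_mono[of "{t+1..V}" "\<lambda>j. \<Sum>k\<in>{1..\<kappa>}. \<epsilon> j k * nn U j k" "\<lambda>_. 1"] by simp
  have "(\<Sum>s\<in>{1..<t}. nn U s (y s)) \<le> (\<Sum>s\<in>{1..<t}. 1)"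
    by (rule sum_mono) (use las_le1[OF U] y tV in auto)
  then have b: "(\<Sum>s\<in>{1..<t}. nn U s (y s)) \<le> real (card {1..<t})" by simp
  have "0 \<le> lam * pen \<kappa> C U" using lam pen_nn[OF Cnn, where U=U] by simp
  then show ?thesis using a b unfolding AA_def by linarith
qed

lemma expect_loss:
  assumes "q \<in> distr_on \<kappa>" "yt \<in> {1..\<kappa>}"
  shows "(\<Sum>i\<in>{1..\<kappa>}. q i * loss i yt) = 1 - q yt"
proof -
  have "(\<Sum>i\<in>{1..\<kappa>}. q i * loss i yt) = (\<Sum>i\<in>{1..\<kappa>}. q i - (if i = yt then q yt else 0))"
    by (rule sum.cong) (auto simp: loss_def)
  also have "\<dots> = 1 - q yt" using assms by (simp add: sum_subtractf distr_on_def)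
  finally show ?thesis .
qed

lemma signs_fin: "finite (signs V \<kappa> t)"
  unfolding signs_def by (intro finite_PiE) auto

lemma signs_ne: "signs V \<kappa> t \<noteq> {}"
  unfolding signs_def by (simp add: PiE_eq_empty_iff)

lemma signs_split:
  assumes "1 \<le> t" "t \<le> V"
  shows "(\<Sum>e\<in>signs V \<kappa> (t-1). g e)
      = (\<Sum>\<epsilon>\<in>signs V \<kappa> t. \<Sum>\<sigma>\<in>PiE {1..\<kappa>} (\<lambda>_. {-1, 1::real}). g (\<epsilon>(t := \<sigma>)))"
    and "card (signs V \<kappa> (t-1)) = card (signs V \<kappa> t) * card (PiE {1..\<kappa>} (\<lambda>_. {-1, 1::real}))"
proof -
  define Sg where "Sg = PiE {1..\<kappa>} (\<lambda>_. {-1, 1::real})"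
  have i: "{t - 1 + 1..V} = insert t {t+1..V}" using assms by auto
  have e: "signs V \<kappa> (t-1) = (\<lambda>(\<sigma>, \<epsilon>). \<epsilon>(t := \<sigma>)) ` (Sg \<times> signs V \<kappa> t)"
    unfolding signs_def i Sg_def by (rule PiE_insert_eq)
  have inj: "inj_on (\<lambda>(\<sigma>, \<epsilon>). \<epsilon>(t := \<sigma>)) (Sg \<times> signs V \<kappa> t)"
    unfolding signs_def Sg_def by (rule inj_combinator) simp
  have "(\<Sum>e\<in>signs V \<kappa> (t-1). g e) = (\<Sum>p\<in>Sg \<times> signs V \<kappa> t. g ((\<lambda>(\<sigma>, \<epsilon>). \<epsilon>(t := \<sigma>)) p))"
    unfolding e by (subst sum.reindex[OF inj]) (auto simp: comp_def intro!: sum.cong)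
  also have "\<dots> = (\<Sum>\<sigma>\<in>Sg. \<Sum>\<epsilon>\<in>signs V \<kappa> t. g (\<epsilon>(t := \<sigma>)))"
    by (simp add: sum.cartesian_product split_def)
  also have "\<dots> = (\<Sum>\<epsilon>\<in>signs V \<kappa> t. \<Sum>\<sigma>\<in>Sg. g (\<epsilon>(t := \<sigma>)))"
    by (rule sum.swap)
  finally show "(\<Sum>e\<in>signs V \<kappa> (t-1). g e)
      = (\<Sum>\<epsilon>\<in>signs V \<kappa> t. \<Sum>\<sigma>\<in>PiE {1..\<kappa>} (\<lambda>_. {-1, 1::real}). g (\<epsilon>(t := \<sigma>)))"
    unfolding Sg_def .
  show "card (signs V \<kappa> (t-1)) = card (signs V \<kappa> t) * card (PiE {1..\<kappa>} (\<lambda>_. {-1, 1::real}))"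
  proof -
    have "card (signs V \<kappa> (t-1)) = card Sg * card (signs V \<kappa> t)"
      by (simp only: e card_image[OF inj] card_cartesian_product)
    then show ?thesis by (simp add: Sg_def)
  qed
qed

lemma per_eps:
  fixes Las :: "(nat set \<Rightarrow> (nat \<Rightarrow> nat) \<Rightarrow> 'v::real_inner) set"
  assumes Las: "Las = lasserre V \<kappa> r d B c"
    and k1: "1 \<le> \<kappa>" and lam: "0 \<le> lam"
    and Cnn: "\<forall>cc\<in>C. \<forall>\<alpha>\<in>asg (fst cc) \<kappa>. 0 \<le> snd cc \<alpha>"
    and y: "\<forall>s\<in>{1..<t}. y s \<in> {1..\<kappa>}" and t1: "1 \<le> t" and tV: "t \<le> V"
    and eps: "\<epsilon> \<in> signs V \<kappa> t"
  shows "\<exists>q\<in>distr_on \<kappa>. \<forall>yt\<in>{1..\<kappa>}.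
     (SUP U\<in>Las. obj V \<kappa> C lam t (y(t := yt)) \<epsilon> U) - q yt
     \<le> (\<Sum>\<sigma>\<in>PiE {1..\<kappa>} (\<lambda>_. {-1, 1::real}). SUP U\<in>Las. obj V \<kappa> C lam (t - 1) y (\<epsilon>(t := \<sigma>)) U)
        / card (PiE {1..\<kappa>} (\<lambda>_. {-1, 1::real}))"
proof (cases "Las = {}")
  case True
  define q where "q i = (if i = 1 then 1 else (0::real))" for i :: nat
  have "q \<in> distr_on \<kappa>" using k1 by (simp add: distr_on_def q_def)
  moreover have "card (PiE {1..\<kappa>} (\<lambda>_. {-1, 1::real})) > 0"
    by (simp add: card_PiE numeral_2_eq_2)
  ultimately show ?thesis using True by (intro bexI[of _ q]) (auto simp: q_def)
next
  case False
  define A where "A U = AA V \<kappa> C lam t y \<epsilon> U" for U :: "nat set \<Rightarrow> (nat \<Rightarrow> nat) \<Rightarrow> 'v"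
  define M where "M = 2 * real (card {t+1..V}) + real (card {1..<t})"
  have Ab: "A U \<le> M" if "U \<in> Las" for U
    unfolding A_def M_def by (rule AA_bd[OF _ eps lam Cnn y tV]) (use that Las in simp)
  have an: "0 \<le> nn U t k" for U :: "nat set \<Rightarrow> (nat \<Rightarrow> nat) \<Rightarrow> 'v" and k by (simp add: nn_def)
  have as: "(\<Sum>k\<in>{1..\<kappa>}. nn U t k) = 1" if "U \<in> Las" for U
    using las_sum[of U V \<kappa> r d B c t] that Las t1 tV by auto
  note co = core[where X=Las and A=A and a="\<lambda>U k. nn U t k" and \<kappa>=\<kappa> and M=M, OF False Ab an as k1]
  have e1: "(SUP U\<in>Las. obj V \<kappa> C lam t (y(t := yt)) \<epsilon> U) = Sp Las A (\<lambda>U. nn U t yt)" for yt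
    unfolding Sp_def A_def by (rule SUP_cong) (simp_all add: obj_t[OF t1])
  have e2: "(SUP U\<in>Las. obj V \<kappa> C lam (t - 1) y (\<epsilon>(t := \<sigma>)) U)
      = Sp Las A (\<lambda>U. 2 * (\<Sum>k\<in>{1..\<kappa>}. \<sigma> k * nn U t k))" for \<sigma>
    unfolding Sp_def A_def by (rule SUP_cong[OF refl], rule obj_tm1[OF t1 tV])
  show ?thesis unfolding e1 e2 using co by simp
qed

lemma ind_comb:
  assumes "consistent S1 a1 S2 a2"
  shows "((\<forall>v\<in>S1. g v = a1 v) \<and> (\<forall>v\<in>S2. g v = a2 v)) \<longleftrightarrow> (\<forall>v\<in>S1 \<union> S2. g v = comb S1 a1 S2 a2 v)"
  using assms unfolding consistent_def comb_def by auto

lemma U0_las: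
  fixes f :: "'x \<Rightarrow> nat" and x :: "nat \<Rightarrow> 'x" and e :: "'v::real_inner"
  assumes e: "norm e = 1"
    and fr: "\<forall>z. f z \<in> {1..\<kappa>}"
    and pol: "\<forall>j\<in>{1..d}. (\<Sum>t\<in>{1..V}. \<Sum>i\<in>{1..\<kappa>}. (if f (x t) = i then 1 else 0) * B j t i) \<le> c j"
  shows "(\<lambda>S \<alpha>. if \<forall>v\<in>S. f (x v) = \<alpha> v then e else 0) \<in> lasserre V \<kappa> r d B c"
proof -
  define U0 where "U0 = (\<lambda>S (\<alpha>::nat\<Rightarrow>nat). if \<forall>v\<in>S. f (x v) = \<alpha> v then e else 0)"
  have ee: "inner e e = 1" using e by (simp add: dot_square_norm)
  have inn: "inner (U0 S1 a1) (U0 S2 a2) = (if (\<forall>v\<in>S1. f (x v) = a1 v) \<and> (\<forall>v\<in>S2. f (x v) = a2 v) then 1 else 0)"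
    for S1 a1 S2 a2 by (simp add: U0_def ee)
  have nrm: "(norm (U0 S a))\<^sup>2 = (if \<forall>v\<in>S. f (x v) = a v then 1 else 0)" for S a
    by (simp add: U0_def e)
  have c1: "\<not> consistent S1 a1 S2 a2 \<longrightarrow> inner (U0 S1 a1) (U0 S2 a2) = 0" for S1 a1 S2 a2
    unfolding inn consistent_def by auto
  have c2: "consistent S1 a1 S2 a2 \<and> consistent S3 a3 S4 a4 \<and> S1 \<union> S2 = S3 \<union> S4 \<and>
        comb S1 a1 S2 a2 = comb S3 a3 S4 a4 \<longrightarrow>
        inner (U0 S1 a1) (U0 S2 a2) = inner (U0 S3 a3) (U0 S4 a4)" for S1 a1 S2 a2 S3 a3 S4 a4
  proof
    assume h: "consistent S1 a1 S2 a2 \<and> consistent S3 a3 S4 a4 \<and> S1 \<union> S2 = S3 \<union> S4 \<and>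
        comb S1 a1 S2 a2 = comb S3 a3 S4 a4"
    show "inner (U0 S1 a1) (U0 S2 a2) = inner (U0 S3 a3) (U0 S4 a4)"
    proof -
      have i12: "((\<forall>v\<in>S1. f (x v) = a1 v) \<and> (\<forall>v\<in>S2. f (x v) = a2 v)) \<longleftrightarrow> (\<forall>v\<in>S1 \<union> S2. f (x v) = comb S1 a1 S2 a2 v)"
        using ind_comb[of S1 a1 S2 a2 "\<lambda>v. f (x v)"] h by blast
      have i34: "((\<forall>v\<in>S3. f (x v) = a3 v) \<and> (\<forall>v\<in>S4. f (x v) = a4 v)) \<longleftrightarrow> (\<forall>v\<in>S3 \<union> S4. f (x v) = comb S3 a3 S4 a4 v)"
        using ind_comb[of S3 a3 S4 a4 "\<lambda>v. f (x v)"] h by blast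
      show ?thesis unfolding inn i12 i34 using h by simp
    qed
  qed
  have c3: "(\<Sum>k\<in>{1..\<kappa>}. (norm (U0 {i} (sg i k)))\<^sup>2) = 1" for i
  proof -
    have "(\<Sum>k\<in>{1..\<kappa>}. (norm (U0 {i} (sg i k)))\<^sup>2) = (\<Sum>k\<in>{1..\<kappa>}. if f (x i) = k then 1 else 0)"
      by (rule sum.cong) (auto simp: nrm sg_def)
    also have "\<dots> = 1" using fr by simp
    finally show ?thesis .
  qed
  have c4: "(norm (U0 {} (\<lambda>_. undefined)))\<^sup>2 = 1" by (simp add: nrm)
  have c5: "0 \<le> inner (U0 S1 a1) (U0 S2 a2)" for S1 a1 S2 a2 by (simp add: inn)
  have c6: "(\<Sum>v\<in>{1..V}. \<Sum>\<beta>\<in>{1..\<kappa>}.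
           (if v \<in> S \<and> \<alpha> v \<noteq> \<beta> then 0
            else (norm (U0 (S \<union> {v}) (comb S \<alpha> {v} (sg v \<beta>))))\<^sup>2) * B j v \<beta>)
        \<le> c j * (norm (U0 S \<alpha>))\<^sup>2" if j: "j \<in> {1..d}" for S \<alpha> j
  proof (cases "\<forall>v\<in>S. f (x v) = \<alpha> v")
    case True
    have "(if v \<in> S \<and> \<alpha> v \<noteq> \<beta> then 0 else (norm (U0 (S \<union> {v}) (comb S \<alpha> {v} (sg v \<beta>))))\<^sup>2)
        = (if f (x v) = \<beta> then 1 else 0)" for v \<beta>
      using True by (auto simp: nrm comb_def sg_def)
    then have "(\<Sum>v\<in>{1..V}. \<Sum>\<beta>\<in>{1..\<kappa>}.
           (if v \<in> S \<and> \<alpha> v \<noteq> \<beta> then 0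
            else (norm (U0 (S \<union> {v}) (comb S \<alpha> {v} (sg v \<beta>))))\<^sup>2) * B j v \<beta>)
        = (\<Sum>t\<in>{1..V}. \<Sum>i\<in>{1..\<kappa>}. (if f (x t) = i then 1 else 0) * B j t i)" by simp
    also have "\<dots> \<le> c j" using pol j by blast
    finally show ?thesis using True by (simp add: nrm)
  next
    case False
    have "(if v \<in> S \<and> \<alpha> v \<noteq> \<beta> then 0 else (norm (U0 (S \<union> {v}) (comb S \<alpha> {v} (sg v \<beta>))))\<^sup>2) = 0" for v \<beta>
      using False by (auto simp: nrm comb_def)
    then show ?thesis using False by (auto simp: nrm)
  qed
  show ?thesis unfolding U0_def[symmetric] lasserre_def
    using c1 c2 c3 c4 c5 c6 by auto
qed

lemma asg_iff:
  assumes "\<alpha> \<in> asg S \<kappa>"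
  shows "(\<forall>v\<in>S. g v = \<alpha> v) \<longleftrightarrow> \<alpha> = restrict g S"
proof
  assume h: "\<forall>v\<in>S. g v = \<alpha> v"
  show "\<alpha> = restrict g S"
  proof
    fix v show "\<alpha> v = restrict g S v"
    proof (cases "v \<in> S")
      case True then show ?thesis using h by simp
    next
      case False
      have "\<alpha> \<in> PiE S (\<lambda>_. {1..\<kappa>})" using assms by (simp add: asg_def)
      then have "\<alpha> v = undefined" using False by (rule PiE_arb)
      then show ?thesis using False by simp
    qed
  qed
qed auto

lemma part_i:
  fixes x :: "nat \<Rightarrow> 'x" and f :: "'x \<Rightarrow> nat" and y :: "nat \<Rightarrow> nat"
  assumes lam: "0 < lam" and fL: "f \<in> LK L x C K"
    and fr: "\<forall>z. f z \<in> {1..\<kappa>}"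
    and pol: "\<forall>j\<in>{1..d}. (\<Sum>t\<in>{1..V}. \<Sum>i\<in>{1..\<kappa>}. (if f (x t) = i then 1 else 0) * B j t i) \<le> c j"
    and Csub: "\<forall>cc\<in>C. fst cc \<subseteq> {1..V}"
    and Cnn: "\<forall>cc\<in>C. \<forall>\<alpha>\<in>asg (fst cc) \<kappa>. 0 \<le> snd cc \<alpha>"
    and y: "\<forall>s\<in>{1..V}. y s \<in> {1..\<kappa>}"
  shows "- (\<Sum>t\<in>{1..V}. loss (f (x t)) (y t))
     \<le> Rel (lasserre V \<kappa> r d B c :: (nat set \<Rightarrow> (nat \<Rightarrow> nat) \<Rightarrow> real ^ 'n) set) V \<kappa> C lam K V y"
proof -
  define Las where "Las = (lasserre V \<kappa> r d B c :: (nat set \<Rightarrow> (nat \<Rightarrow> nat) \<Rightarrow> real ^ 'n) set)"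
  define e :: "real ^ 'n" where "e = axis undefined 1"
  have en: "norm e = 1" by (simp add: e_def)
  define U0 where "U0 = (\<lambda>S (\<alpha>::nat\<Rightarrow>nat). if \<forall>v\<in>S. f (x v) = \<alpha> v then e else 0)"
  have U0L: "U0 \<in> Las" unfolding U0_def Las_def by (rule U0_las[OF en fr pol])
  have nrm: "(norm (U0 S a))\<^sup>2 = (if \<forall>v\<in>S. f (x v) = a v then 1 else 0)" for S a
    by (simp add: U0_def en)
  have sV: "signs V \<kappa> V = {\<lambda>_. undefined}" by (simp add: signs_def)
  define \<epsilon>0 :: "nat \<Rightarrow> nat \<Rightarrow> real" where "\<epsilon>0 = (\<lambda>_. undefined)"
  have RelV: "Rel Las V \<kappa> C lam K V y = (SUP U\<in>Las. obj V \<kappa> C lam V y \<epsilon>0 U) - real V + lam * K"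
    by (simp add: Rel_def sV \<epsilon>0_def)
  have objb: "obj V \<kappa> C lam V y \<epsilon>0 U \<le> real V" if U: "U \<in> Las" for U
  proof -
    have "(\<Sum>s\<in>{1..V}. nn U s (y s)) \<le> (\<Sum>s\<in>{1..V}. 1)"
      by (rule sum_mono) (use las_le1[of U V \<kappa> r d B c] U y Las_def in auto)
    moreover have "0 \<le> lam * pen \<kappa> C U" using lam pen_nn[OF Cnn, where U=U] by simp
    ultimately show ?thesis unfolding obj_def by (simp add: nn_def pen_def)
  qed
  have le: "obj V \<kappa> C lam V y \<epsilon>0 U0 \<le> (SUP U\<in>Las. obj V \<kappa> C lam V y \<epsilon>0 U)"
    by (rule cSUP_upper[OF U0L]) (rule bdd_aboveI2[where M="real V"], rule objb)
  have s1: "(\<Sum>s\<in>{1..V}. (norm (U0 {s} (sg s (y s))))\<^sup>2) = (\<Sum>s\<in>{1..V}. 1 - loss (f (x s)) (y s))"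
    by (rule sum.cong) (auto simp: nrm sg_def loss_def)
  have s2: "(\<Sum>\<alpha>\<in>asg (fst cc) \<kappa>. snd cc \<alpha> * (norm (U0 (fst cc) \<alpha>))\<^sup>2)
      = snd cc (restrict (\<lambda>t. f (x t)) (fst cc))" if cc: "cc \<in> C" for cc
  proof -
    define S where "S = fst cc"
    define \<rho> where "\<rho> = restrict (\<lambda>t. f (x t)) S"
    have "S \<subseteq> {1..V}" using Csub cc S_def by auto
    then have "finite S" using finite_subset by blast
    then have fin: "finite (asg S \<kappa>)" unfolding asg_def by (intro finite_PiE) auto
    have rin: "\<rho> \<in> asg S \<kappa>" using fr by (simp add: asg_def \<rho>_def)
    have "(\<Sum>\<alpha>\<in>asg S \<kappa>. snd cc \<alpha> * (norm (U0 S \<alpha>))\<^sup>2) = (\<Sum>\<alpha>\<in>asg S \<kappa>. if \<alpha> = \<rho> then snd cc \<alpha> else 0)"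
    proof (rule sum.cong[OF refl])
      fix \<alpha> assume a: "\<alpha> \<in> asg S \<kappa>"
      show "snd cc \<alpha> * (norm (U0 S \<alpha>))\<^sup>2 = (if \<alpha> = \<rho> then snd cc \<alpha> else 0)"
        unfolding nrm asg_iff[OF a, of "\<lambda>t. f (x t)"] \<rho>_def by simp
    qed
    also have "\<dots> = snd cc \<rho>" using fin rin by (simp add: sum.delta)
    finally show ?thesis unfolding S_def \<rho>_def .
  qed
  have objU0: "obj V \<kappa> C lam V y \<epsilon>0 U0
     = real V - (\<Sum>t\<in>{1..V}. loss (f (x t)) (y t)) - lam * (\<Sum>cc\<in>C. snd cc (restrict (\<lambda>t. f (x t)) (fst cc)))"
    unfolding obj_def s1 using s2 by (simp add: sum_subtractf)
  have K: "(\<Sum>cc\<in>C. snd cc (restrict (\<lambda>t. f (x t)) (fst cc))) \<le> K" using fL by (simp add: LK_def)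
  have "lam * (\<Sum>cc\<in>C. snd cc (restrict (\<lambda>t. f (x t)) (fst cc))) \<le> lam * K"
    using K lam by simp
  then show ?thesis using le objU0 RelV unfolding Las_def by linarith
qed

lemma step_lemma:
  fixes Las :: "(nat set \<Rightarrow> (nat \<Rightarrow> nat) \<Rightarrow> 'v::real_inner) set"
  assumes t1: "1 \<le> t" and tV: "t \<le> V"
    and Q: "\<forall>\<epsilon>\<in>signs V \<kappa> t. Qf \<epsilon> \<in> distr_on \<kappa> \<and> (\<forall>yt\<in>{1..\<kappa>}.
       (SUP U\<in>Las. obj V \<kappa> C lam t (y(t := yt)) \<epsilon> U) - Qf \<epsilon> yt
       \<le> (\<Sum>\<sigma>\<in>PiE {1..\<kappa>} (\<lambda>_. {-1, 1::real}). SUP U\<in>Las. obj V \<kappa> C lam (t - 1) y (\<epsilon>(t := \<sigma>)) U)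
          / card (PiE {1..\<kappa>} (\<lambda>_. {-1, 1::real})))"
    and yt: "yt \<in> {1..\<kappa>}"
  shows "(\<Sum>\<epsilon>\<in>signs V \<kappa> t. \<Sum>i\<in>{1..\<kappa>}. Qf \<epsilon> i * loss i yt) / real (card (signs V \<kappa> t))
      + Rel Las V \<kappa> C lam K t (y(t := yt)) \<le> Rel Las V \<kappa> C lam K (t - 1) y"
proof -
  define Sg where "Sg = PiE {1..\<kappa>} (\<lambda>_. {-1, 1::real})"
  define N where "N = real (card (signs V \<kappa> t))"
  define Ns where "Ns = real (card Sg)"
  define \<Phi> where "\<Phi> \<epsilon> = (SUP U\<in>Las. obj V \<kappa> C lam t (y(t := yt)) \<epsilon> U)" for \<epsilon>
  define G where "G \<epsilon> \<sigma> = (SUP U\<in>Las. obj V \<kappa> C lam (t - 1) y (\<epsilon>(t := \<sigma>)) U)" for \<epsilon> \<sigma>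
  define R where "R \<epsilon> = (\<Sum>\<sigma>\<in>Sg. G \<epsilon> \<sigma>) / Ns" for \<epsilon>
  have Npos: "0 < N" unfolding N_def using signs_fin signs_ne by (simp add: card_gt_0_iff)
  have Nspos: "0 < Ns" unfolding Ns_def Sg_def by (simp add: card_PiE numeral_2_eq_2)
  have Q': "(\<Sum>i\<in>{1..\<kappa>}. Qf \<epsilon> i * loss i yt) + \<Phi> \<epsilon> \<le> 1 + R \<epsilon>" if "\<epsilon> \<in> signs V \<kappa> t" for \<epsilon>
  proof -
    have "Qf \<epsilon> \<in> distr_on \<kappa>" "\<Phi> \<epsilon> - Qf \<epsilon> yt \<le> R \<epsilon>"
      using Q that yt unfolding \<Phi>_def R_def G_def Sg_def Ns_def by auto
    then show ?thesis using expect_loss[of "Qf \<epsilon>" \<kappa> yt] yt by simp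
  qed
  have "(\<Sum>\<epsilon>\<in>signs V \<kappa> t. \<Sum>i\<in>{1..\<kappa>}. Qf \<epsilon> i * loss i yt) / N + (\<Sum>\<epsilon>\<in>signs V \<kappa> t. \<Phi> \<epsilon>) / N
      = (\<Sum>\<epsilon>\<in>signs V \<kappa> t. (\<Sum>i\<in>{1..\<kappa>}. Qf \<epsilon> i * loss i yt) + \<Phi> \<epsilon>) / N"
    by (simp add: sum.distrib add_divide_distrib)
  also have "\<dots> \<le> (\<Sum>\<epsilon>\<in>signs V \<kappa> t. 1 + R \<epsilon>) / N"
    using Npos by (intro divide_right_mono sum_mono Q') auto
  also have "\<dots> = 1 + (\<Sum>\<epsilon>\<in>signs V \<kappa> t. R \<epsilon>) / N"
    using Npos by (simp add: sum.distrib add_divide_distrib N_def)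
  finally have A: "(\<Sum>\<epsilon>\<in>signs V \<kappa> t. \<Sum>i\<in>{1..\<kappa>}. Qf \<epsilon> i * loss i yt) / N + (\<Sum>\<epsilon>\<in>signs V \<kappa> t. \<Phi> \<epsilon>) / N
     \<le> 1 + (\<Sum>\<epsilon>\<in>signs V \<kappa> t. R \<epsilon>) / N" .
  have B: "(\<Sum>e\<in>signs V \<kappa> (t-1). SUP U\<in>Las. obj V \<kappa> C lam (t - 1) y e U) / real (card (signs V \<kappa> (t-1)))
      = (\<Sum>\<epsilon>\<in>signs V \<kappa> t. R \<epsilon>) / N"
  proof -
    have "(\<Sum>e\<in>signs V \<kappa> (t-1). SUP U\<in>Las. obj V \<kappa> C lam (t - 1) y e U) = (\<Sum>\<epsilon>\<in>signs V \<kappa> t. \<Sum>\<sigma>\<in>Sg. G \<epsilon> \<sigma>)"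
      unfolding G_def Sg_def by (rule signs_split(1)[OF t1 tV])
    moreover have "real (card (signs V \<kappa> (t-1))) = N * Ns"
      unfolding N_def Ns_def Sg_def signs_split(2)[OF t1 tV] by simp
    ultimately show ?thesis
      unfolding R_def using Npos Nspos by (simp add: sum_divide_distrib[symmetric] field_simps)
  qed
  have tt: "real (t - 1) = real t - 1" using t1 by simp
  show ?thesis using A B tt unfolding Rel_def N_def[symmetric] \<Phi>_def by simp
qed

theorem lemma3:
  fixes V \<kappa> r d :: nat
    and L :: "('x \<Rightarrow> nat) set" and x :: "nat \<Rightarrow> 'x"
    and Cs :: "nat \<Rightarrow> constr set"
    and B :: "nat \<Rightarrow> nat \<Rightarrow> nat \<Rightarrow> real" and c :: "nat \<Rightarrow> real"
    and K lam :: real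
  assumes "V \<ge> 1" and "\<kappa> \<ge> 2" and "r \<ge> 1" and "lam > 0" and "K \<ge> 0"
    and L_range: "\<forall>f\<in>L. \<forall>z. f z \<in> {1..\<kappa>}"
    and C_fin: "\<forall>t\<in>{1..V}. finite (Cs t)"
    and C_wf: "\<forall>t\<in>{1..V}. \<forall>cc\<in>Cs t. fst cc \<subseteq> {1..V} \<and> (\<forall>\<alpha>\<in>asg (fst cc) \<kappa>. 0 \<le> snd cc \<alpha>)"
    and polytope: "\<forall>M :: nat \<Rightarrow> nat \<Rightarrow> real.
        (\<forall>t\<in>{1..V}. \<forall>i\<in>{1..\<kappa>}. M t i \<in> {0, 1}) \<longrightarrow>
        ((\<exists>f\<in>L. \<forall>t\<in>{1..V}. \<forall>i\<in>{1..\<kappa>}. M t i = (if f (x t) = i then 1 else 0))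
         \<longleftrightarrow> (\<forall>j\<in>{1..d}. (\<Sum>t\<in>{1..V}. \<Sum>i\<in>{1..\<kappa>}. M t i * B j t i) \<le> c j))"
  shows "admissible V \<kappa> (LK L x (allC V Cs) K) x
           (Rel (lasserre V \<kappa> r d B c :: (nat set \<Rightarrow> (nat \<Rightarrow> nat) \<Rightarrow> real ^ 'n) set)
                V \<kappa> (allC V Cs) lam K)
       \<and> (\<forall>t\<in>{1..V}. \<forall>y. (\<forall>s\<in>{1..<t}. y s \<in> {1..\<kappa>}) \<longrightarrow>
            (\<forall>qh :: (nat \<Rightarrow> nat \<Rightarrow> real) \<Rightarrow> nat \<Rightarrow> real.
               (\<forall>\<epsilon>\<in>signs V \<kappa> t. qh \<epsilon> \<in> distr_on \<kappa> \<and>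
                  (\<forall>q\<in>distr_on \<kappa>.
                     Max ((\<lambda>yt. (SUP U\<in>(lasserre V \<kappa> r d B c :: (nat set \<Rightarrow> (nat \<Rightarrow> nat) \<Rightarrow> real ^ 'n) set).
                                   obj V \<kappa> (allC V Cs) lam t (y(t := yt)) \<epsilon> U) - qh \<epsilon> yt) ` {1..\<kappa>})
                     \<le> Max ((\<lambda>yt. (SUP U\<in>(lasserre V \<kappa> r d B c :: (nat set \<Rightarrow> (nat \<Rightarrow> nat) \<Rightarrow> real ^ 'n) set).
                                   obj V \<kappa> (allC V Cs) lam t (y(t := yt)) \<epsilon> U) - q yt) ` {1..\<kappa>})))
               \<longrightarrow> Max ((\<lambda>yt. (\<Sum>\<epsilon>\<in>signs V \<kappa> t. \<Sum>i\<in>{1..\<kappa>}. qh \<epsilon> i * loss i yt)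
                                 / real (card (signs V \<kappa> t))
                              + Rel (lasserre V \<kappa> r d B c :: (nat set \<Rightarrow> (nat \<Rightarrow> nat) \<Rightarrow> real ^ 'n) set)
                                    V \<kappa> (allC V Cs) lam K t (y(t := yt))) ` {1..\<kappa>})
                   \<le> Rel (lasserre V \<kappa> r d B c :: (nat set \<Rightarrow> (nat \<Rightarrow> nat) \<Rightarrow> real ^ 'n) set)
                         V \<kappa> (allC V Cs) lam K (t - 1) y))"
proof -
  define Las where "Las = (lasserre V \<kappa> r d B c :: (nat set \<Rightarrow> (nat \<Rightarrow> nat) \<Rightarrow> real ^ 'n) set)"
  define C where "C = allC V Cs"
  have k1: "1 \<le> \<kappa>" using assms(2) by simp
  have lam0: "0 \<le> lam" using assms(4) by simp
  have Cnn: "\<forall>cc\<in>C. \<forall>\<alpha>\<in>asg (fst cc) \<kappa>. 0 \<le> snd cc \<alpha>" using C_wf by (auto simp: C_def allC_def)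
  have Csub: "\<forall>cc\<in>C. fst cc \<subseteq> {1..V}" using C_wf by (auto simp: C_def allC_def)
  have pe: "\<forall>\<epsilon>\<in>signs V \<kappa> t. \<exists>q. q \<in> distr_on \<kappa> \<and> (\<forall>yt\<in>{1..\<kappa>}.
     (SUP U\<in>Las. obj V \<kappa> C lam t (y(t := yt)) \<epsilon> U) - q yt
     \<le> (\<Sum>\<sigma>\<in>PiE {1..\<kappa>} (\<lambda>_. {-1, 1::real}). SUP U\<in>Las. obj V \<kappa> C lam (t - 1) y (\<epsilon>(t := \<sigma>)) U)
        / card (PiE {1..\<kappa>} (\<lambda>_. {-1, 1::real})))"
    if t: "t \<in> {1..V}" and y: "\<forall>s\<in>{1..<t}. y s \<in> {1..\<kappa>}" for t y
  proof
    fix \<epsilon> assume e: "\<epsilon> \<in> signs V \<kappa> t"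
    have t1: "1 \<le> t" and tV: "t \<le> V" using t by auto
    show "\<exists>q. q \<in> distr_on \<kappa> \<and> (\<forall>yt\<in>{1..\<kappa>}.
     (SUP U\<in>Las. obj V \<kappa> C lam t (y(t := yt)) \<epsilon> U) - q yt
     \<le> (\<Sum>\<sigma>\<in>PiE {1..\<kappa>} (\<lambda>_. {-1, 1::real}). SUP U\<in>Las. obj V \<kappa> C lam (t - 1) y (\<epsilon>(t := \<sigma>)) U)
        / card (PiE {1..\<kappa>} (\<lambda>_. {-1, 1::real})))"
      using per_eps[OF Las_def k1 lam0 Cnn y t1 tV e] by blast
  qed
  have Pi: "\<forall>y. (\<forall>s\<in>{1..V}. y s \<in> {1..\<kappa>}) \<longrightarrow>
        (\<forall>f\<in>LK L x C K. - (\<Sum>t\<in>{1..V}. loss (f (x t)) (y t)) \<le> Rel Las V \<kappa> C lam K V y)"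
  proof (intro allI impI ballI)
    fix y f assume y: "\<forall>s\<in>{1..V}. y s \<in> {1..\<kappa>}" and f: "f \<in> LK L x C K"
    have fL: "f \<in> L" using f by (simp add: LK_def)
    have fr: "\<forall>z. f z \<in> {1..\<kappa>}" using L_range fL by blast
    define Mf where "Mf t i = (if f (x t) = i then 1 else (0::real))" for t i
    have "\<forall>t\<in>{1..V}. \<forall>i\<in>{1..\<kappa>}. Mf t i \<in> {0, 1}" by (simp add: Mf_def)
    moreover have "\<exists>g\<in>L. \<forall>t\<in>{1..V}. \<forall>i\<in>{1..\<kappa>}. Mf t i = (if g (x t) = i then 1 else 0)"
      using fL by (auto simp: Mf_def)
    ultimately have pol: "\<forall>j\<in>{1..d}. (\<Sum>t\<in>{1..V}. \<Sum>i\<in>{1..\<kappa>}. Mf t i * B j t i) \<le> c j"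
      using polytope by blast
    show "- (\<Sum>t\<in>{1..V}. loss (f (x t)) (y t)) \<le> Rel Las V \<kappa> C lam K V y"
      unfolding Las_def by (rule part_i[OF assms(4) f fr pol[unfolded Mf_def] Csub Cnn y])
  qed
  have Pii: "\<forall>t\<in>{1..V}. \<forall>y. (\<forall>s\<in>{1..<t}. y s \<in> {1..\<kappa>}) \<longrightarrow>
        (INF q\<in>distr_on \<kappa>. Max ((\<lambda>yt. (\<Sum>i\<in>{1..\<kappa>}. q i * loss i yt) + Rel Las V \<kappa> C lam K t (y(t := yt))) ` {1..\<kappa>}))
          \<le> Rel Las V \<kappa> C lam K (t - 1) y"
  proof (intro ballI allI impI)
    fix t y assume t: "t \<in> {1..V}" and y: "\<forall>s\<in>{1..<t}. y s \<in> {1..\<kappa>}"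
    have t1: "1 \<le> t" and tV: "t \<le> V" using t by auto
    obtain Q where Q: "\<forall>\<epsilon>\<in>signs V \<kappa> t. Q \<epsilon> \<in> distr_on \<kappa> \<and> (\<forall>yt\<in>{1..\<kappa>}.
     (SUP U\<in>Las. obj V \<kappa> C lam t (y(t := yt)) \<epsilon> U) - Q \<epsilon> yt
     \<le> (\<Sum>\<sigma>\<in>PiE {1..\<kappa>} (\<lambda>_. {-1, 1::real}). SUP U\<in>Las. obj V \<kappa> C lam (t - 1) y (\<epsilon>(t := \<sigma>)) U)
        / card (PiE {1..\<kappa>} (\<lambda>_. {-1, 1::real})))"
      using bchoice[OF pe[OF t y]] by blast
    define N where "N = real (card (signs V \<kappa> t))"
    have Npos: "0 < N" unfolding N_def using signs_fin signs_ne by (simp add: card_gt_0_iff)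
    define qb where "qb i = (\<Sum>\<epsilon>\<in>signs V \<kappa> t. Q \<epsilon> i) / N" for i
    have qbd: "qb \<in> distr_on \<kappa>"
    proof -
      have "0 \<le> qb i" if "i \<in> {1..\<kappa>}" for i
      proof -
        have "0 \<le> (\<Sum>\<epsilon>\<in>signs V \<kappa> t. Q \<epsilon> i)" using Q that by (intro sum_nonneg) (auto simp: distr_on_def)
        then show ?thesis using Npos by (simp add: qb_def)
      qed
      moreover have "(\<Sum>i\<in>{1..\<kappa>}. qb i) = 1"
      proof -
        have "(\<Sum>i\<in>{1..\<kappa>}. qb i) = (\<Sum>\<epsilon>\<in>signs V \<kappa> t. \<Sum>i\<in>{1..\<kappa>}. Q \<epsilon> i) / N"
        proof -
          have "(\<Sum>i\<in>{1..\<kappa>}. \<Sum>\<epsilon>\<in>signs V \<kappa> t. Q \<epsilon> i) = (\<Sum>\<epsilon>\<in>signs V \<kappa> t. \<Sum>i\<in>{1..\<kappa>}. Q \<epsilon> i)"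
            by (rule sum.swap)
          then show ?thesis unfolding qb_def sum_divide_distrib[symmetric] by simp
        qed
        also have "\<dots> = (\<Sum>\<epsilon>\<in>signs V \<kappa> t. 1) / N"
          using Q by (simp add: distr_on_def)
        finally show ?thesis using Npos by (simp add: N_def)
      qed
      ultimately show ?thesis by (simp add: distr_on_def)
    qed
    have val: "Max ((\<lambda>yt. (\<Sum>i\<in>{1..\<kappa>}. qb i * loss i yt) + Rel Las V \<kappa> C lam K t (y(t := yt))) ` {1..\<kappa>})
        \<le> Rel Las V \<kappa> C lam K (t - 1) y"
    proof -
      have each: "(\<Sum>i\<in>{1..\<kappa>}. qb i * loss i yt) + Rel Las V \<kappa> C lam K t (y(t := yt)) \<le> Rel Las V \<kappa> C lam K (t - 1) y"
        if yt: "yt \<in> {1..\<kappa>}" for yt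
      proof -
      have "(\<Sum>i\<in>{1..\<kappa>}. qb i * loss i yt) = (\<Sum>\<epsilon>\<in>signs V \<kappa> t. \<Sum>i\<in>{1..\<kappa>}. Q \<epsilon> i * loss i yt) / N"
      proof -
        have "(\<Sum>i\<in>{1..\<kappa>}. \<Sum>\<epsilon>\<in>signs V \<kappa> t. Q \<epsilon> i * loss i yt) = (\<Sum>\<epsilon>\<in>signs V \<kappa> t. \<Sum>i\<in>{1..\<kappa>}. Q \<epsilon> i * loss i yt)"
          by (rule sum.swap)
        then show ?thesis unfolding qb_def
          by (simp add: sum_divide_distrib[symmetric] sum_distrib_right times_divide_eq_left)
      qed
      then show ?thesis
        using step_lemma[OF t1 tV Q yt] unfolding N_def by simp
    qed
      then show ?thesis using k1 by (subst Max_le_iff) auto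
    qed
    have bdd: "bdd_below ((\<lambda>q. Max ((\<lambda>yt. (\<Sum>i\<in>{1..\<kappa>}. q i * loss i yt) + Rel Las V \<kappa> C lam K t (y(t := yt))) ` {1..\<kappa>})) ` distr_on \<kappa>)"
    proof (rule bdd_belowI2[where m="Rel Las V \<kappa> C lam K t (y(t := 1))"])
      fix q assume q: "q \<in> distr_on \<kappa>"
      have "0 \<le> (\<Sum>i\<in>{1..\<kappa>}. q i * loss i 1)"
        using q by (intro sum_nonneg) (auto simp: distr_on_def loss_def)
      moreover have "(\<Sum>i\<in>{1..\<kappa>}. q i * loss i 1) + Rel Las V \<kappa> C lam K t (y(t := 1))
          \<le> Max ((\<lambda>yt. (\<Sum>i\<in>{1..\<kappa>}. q i * loss i yt) + Rel Las V \<kappa> C lam K t (y(t := yt))) ` {1..\<kappa>})"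
        using k1 by (intro Max_ge) auto
      ultimately show "Rel Las V \<kappa> C lam K t (y(t := 1))
          \<le> Max ((\<lambda>yt. (\<Sum>i\<in>{1..\<kappa>}. q i * loss i yt) + Rel Las V \<kappa> C lam K t (y(t := yt))) ` {1..\<kappa>})"
        by linarith
    qed
    have "(INF q\<in>distr_on \<kappa>. Max ((\<lambda>yt. (\<Sum>i\<in>{1..\<kappa>}. q i * loss i yt) + Rel Las V \<kappa> C lam K t (y(t := yt))) ` {1..\<kappa>}))
        \<le> Max ((\<lambda>yt. (\<Sum>i\<in>{1..\<kappa>}. qb i * loss i yt) + Rel Las V \<kappa> C lam K t (y(t := yt))) ` {1..\<kappa>})"
      by (rule cINF_lower[OF bdd qbd])
    then show "(INF q\<in>distr_on \<kappa>. Max ((\<lambda>yt. (\<Sum>i\<in>{1..\<kappa>}. q i * loss i yt) + Rel Las V \<kappa> C lam K t (y(t := yt))) ` {1..\<kappa>}))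
          \<le> Rel Las V \<kappa> C lam K (t - 1) y" using val by linarith
  qed
  have Piii: "\<forall>t\<in>{1..V}. \<forall>y. (\<forall>s\<in>{1..<t}. y s \<in> {1..\<kappa>}) \<longrightarrow>
            (\<forall>qh :: (nat \<Rightarrow> nat \<Rightarrow> real) \<Rightarrow> nat \<Rightarrow> real.
               (\<forall>\<epsilon>\<in>signs V \<kappa> t. qh \<epsilon> \<in> distr_on \<kappa> \<and>
                  (\<forall>q\<in>distr_on \<kappa>.
                     Max ((\<lambda>yt. (SUP U\<in>Las. obj V \<kappa> C lam t (y(t := yt)) \<epsilon> U) - qh \<epsilon> yt) ` {1..\<kappa>})
                     \<le> Max ((\<lambda>yt. (SUP U\<in>Las. obj V \<kappa> C lam t (y(t := yt)) \<epsilon> U) - q yt) ` {1..\<kappa>})))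
               \<longrightarrow> Max ((\<lambda>yt. (\<Sum>\<epsilon>\<in>signs V \<kappa> t. \<Sum>i\<in>{1..\<kappa>}. qh \<epsilon> i * loss i yt)
                                 / real (card (signs V \<kappa> t))
                              + Rel Las V \<kappa> C lam K t (y(t := yt))) ` {1..\<kappa>})
                   \<le> Rel Las V \<kappa> C lam K (t - 1) y)"
  proof (intro ballI allI impI)
    fix t y qh assume t: "t \<in> {1..V}" and y: "\<forall>s\<in>{1..<t}. y s \<in> {1..\<kappa>}"
      and hq: "\<forall>\<epsilon>\<in>signs V \<kappa> t. qh \<epsilon> \<in> distr_on \<kappa> \<and>
                  (\<forall>q\<in>distr_on \<kappa>.
                     Max ((\<lambda>yt. (SUP U\<in>Las. obj V \<kappa> C lam t (y(t := yt)) \<epsilon> U) - qh \<epsilon> yt) ` {1..\<kappa>})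
                     \<le> Max ((\<lambda>yt. (SUP U\<in>Las. obj V \<kappa> C lam t (y(t := yt)) \<epsilon> U) - q yt) ` {1..\<kappa>}))"
    have t1: "1 \<le> t" and tV: "t \<le> V" using t by auto
    have Q: "\<forall>\<epsilon>\<in>signs V \<kappa> t. qh \<epsilon> \<in> distr_on \<kappa> \<and> (\<forall>yt\<in>{1..\<kappa>}.
     (SUP U\<in>Las. obj V \<kappa> C lam t (y(t := yt)) \<epsilon> U) - qh \<epsilon> yt
     \<le> (\<Sum>\<sigma>\<in>PiE {1..\<kappa>} (\<lambda>_. {-1, 1::real}). SUP U\<in>Las. obj V \<kappa> C lam (t - 1) y (\<epsilon>(t := \<sigma>)) U)
        / card (PiE {1..\<kappa>} (\<lambda>_. {-1, 1::real})))"
    proof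
      fix \<epsilon> assume e: "\<epsilon> \<in> signs V \<kappa> t"
      define \<Phi> where "\<Phi> yt = (SUP U\<in>Las. obj V \<kappa> C lam t (y(t := yt)) \<epsilon> U)" for yt
      define R where "R = (\<Sum>\<sigma>\<in>PiE {1..\<kappa>} (\<lambda>_. {-1, 1::real}). SUP U\<in>Las. obj V \<kappa> C lam (t - 1) y (\<epsilon>(t := \<sigma>)) U)
        / card (PiE {1..\<kappa>} (\<lambda>_. {-1, 1::real}))"
      obtain q where q: "q \<in> distr_on \<kappa>" and qR: "\<forall>yt\<in>{1..\<kappa>}. \<Phi> yt - q yt \<le> R"
        using pe[OF t y] e unfolding \<Phi>_def R_def by blast
      have hq1: "qh \<epsilon> \<in> distr_on \<kappa>" and
        hq2: "Max ((\<lambda>yt. \<Phi> yt - qh \<epsilon> yt) ` {1..\<kappa>}) \<le> Max ((\<lambda>yt. \<Phi> yt - q yt) ` {1..\<kappa>})"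
        using hq e q unfolding \<Phi>_def by auto
      have m2: "Max ((\<lambda>yt. \<Phi> yt - q yt) ` {1..\<kappa>}) \<le> R"
        using qR k1 by (subst Max_le_iff) auto
      have "\<Phi> yt - qh \<epsilon> yt \<le> R" if yt: "yt \<in> {1..\<kappa>}" for yt
      proof -
        have "\<Phi> yt - qh \<epsilon> yt \<le> Max ((\<lambda>yt. \<Phi> yt - qh \<epsilon> yt) ` {1..\<kappa>})"
          using yt by (intro Max_ge) auto
        then show ?thesis using hq2 m2 by linarith
      qed
      then show "qh \<epsilon> \<in> distr_on \<kappa> \<and> (\<forall>yt\<in>{1..\<kappa>}.
     (SUP U\<in>Las. obj V \<kappa> C lam t (y(t := yt)) \<epsilon> U) - qh \<epsilon> yt
     \<le> (\<Sum>\<sigma>\<in>PiE {1..\<kappa>} (\<lambda>_. {-1, 1::real}). SUP U\<in>Las. obj V \<kappa> C lam (t - 1) y (\<epsilon>(t := \<sigma>)) U)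
        / card (PiE {1..\<kappa>} (\<lambda>_. {-1, 1::real})))"
        using hq1 unfolding \<Phi>_def R_def by blast
    qed
    show "Max ((\<lambda>yt. (\<Sum>\<epsilon>\<in>signs V \<kappa> t. \<Sum>i\<in>{1..\<kappa>}. qh \<epsilon> i * loss i yt)
                                 / real (card (signs V \<kappa> t))
                              + Rel Las V \<kappa> C lam K t (y(t := yt))) ` {1..\<kappa>})
                   \<le> Rel Las V \<kappa> C lam K (t - 1) y"
      using step_lemma[OF t1 tV Q] k1 by (subst Max_le_iff) auto
  qed
  show ?thesis
    unfolding Las_def[symmetric] C_def[symmetric] admissible_def
    using Pi Pii Piii by blast
qed

end
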